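(* Let $(X,\mathrm{d})$ be a compact metric space and $f$ a bi-Lipschitz homeomorphism of $X$ such that $\mathrm{d}$ is $f$-hyperbolic. Then $f$ is Lipschitz-robustly expansive: there are $\epsilon,\delta>0$ such that every bi-Lipschitz homeomorphism $g$ of $(X,\mathrm{d})$ with $\mathrm{d}_L(f,g)<\epsilon$ is expansive with expansive constant $\delta$. Equivalently, every expansive homeomorphism of a compact metric space is Lipschitz-robustly expansive with respect to an $f$-hyperbolic metric.
   Context: A homeomorphism $g$ is expansive with expansive constant $\delta>0$ if $\mathrm{d}(g^n(x),g^n(y))\le\delta$ for all $n\in\mathbb Z$ implies $x=y$. A metric $\mathrm{d}$ defining the topology is $f$-hyperbolic if there are $\delta>0$, $\lambda>1$ such that $\mathrm{d}(x,y)<\delta$ implies $\max\{\mathrm{d}(f(x),f(y)),\mathrm{d}(f^{-1}(x),f^{-1}(y))\}\ge\lambda\,\mathrm{d}(x,y)$. $\mathrm{d}_{C^0}(f,g)=\max_{x}\mathrm{d}(f(x),g(x))+\max_x\mathrm{d}(f^{-1}(x),g^{-1}(x))$; $\mathrm{d}'_L(f,g)=\sup_{x\ne y}\left|\log\frac{\mathrm{d}(f(x),f(y))}{\mathrm{d}(g(x),g(y))}\right|$; $\mathrm{d}_L(f,g)=\mathrm{d}_{C^0}(f,g)+\mathrm{d}'_L(f,g)+\mathrm{d}'_L(f^{-1},g^{-1})$. *)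

theory Defs
  imports "HOL-Analysis.Analysis"
begin

text \<open>The compact metric space (X,d) is a compact subset X of a metric-space type,
  with d = dist. Maps are considered on X only; the inverse of f on X is inv_into X f.\<close>

definition bilip_homeo :: "'a::metric_space set \<Rightarrow> ('a \<Rightarrow> 'a) \<Rightarrow> bool" where
  "bilip_homeo X f \<longleftrightarrow> bij_betw f X X \<and> homeomorphism X X f (inv_into X f) \<and>
     (\<exists>L. lipschitz_on L X f \<and> lipschitz_on L X (inv_into X f))"

definition hyperbolic_metric :: "'a::metric_space set \<Rightarrow> ('a \<Rightarrow> 'a) \<Rightarrow> bool" where
  "hyperbolic_metric X f \<longleftrightarrow> (\<exists>\<delta>>0. \<exists>c>1. \<forall>x\<in>X. \<forall>y\<in>X. dist x y < \<delta> \<longrightarrow>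
     max (dist (f x) (f y)) (dist (inv_into X f x) (inv_into X f y)) \<ge> c * dist x y)"

definition iter_int :: "'a set \<Rightarrow> ('a \<Rightarrow> 'a) \<Rightarrow> int \<Rightarrow> 'a \<Rightarrow> 'a" where
  "iter_int X g n = (if n \<ge> 0 then g ^^ nat n else inv_into X g ^^ nat (- n))"

definition expansive_const :: "'a::metric_space set \<Rightarrow> ('a \<Rightarrow> 'a) \<Rightarrow> real \<Rightarrow> bool" where
  "expansive_const X g \<delta> \<longleftrightarrow> \<delta> > 0 \<and> (\<forall>x\<in>X. \<forall>y\<in>X.
     (\<forall>n::int. dist (iter_int X g n x) (iter_int X g n y) \<le> \<delta>) \<longrightarrow> x = y)"

text \<open>Suprema of nonnegative quantities; inserting 0 makes the empty case 0 and
  does not change the value otherwise.\<close>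
definition d_C0 :: "'a::metric_space set \<Rightarrow> ('a \<Rightarrow> 'a) \<Rightarrow> ('a \<Rightarrow> 'a) \<Rightarrow> real" where
  "d_C0 X f g = Sup (insert 0 ((\<lambda>x. dist (f x) (g x)) ` X))
              + Sup (insert 0 ((\<lambda>x. dist (inv_into X f x) (inv_into X g x)) ` X))"

definition d_L' :: "'a::metric_space set \<Rightarrow> ('a \<Rightarrow> 'a) \<Rightarrow> ('a \<Rightarrow> 'a) \<Rightarrow> real" where
  "d_L' X f g = Sup (insert 0 {\<bar>ln (dist (f x) (f y) / dist (g x) (g y))\<bar> | x y. x \<in> X \<and> y \<in> X \<and> x \<noteq> y})"

definition d_L :: "'a::metric_space set \<Rightarrow> ('a \<Rightarrow> 'a) \<Rightarrow> ('a \<Rightarrow> 'a) \<Rightarrow> real" where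
  "d_L X f g = d_C0 X f g + d_L' X f g + d_L' X (inv_into X f) (inv_into X g)"

end

theory Submission
  imports Defs
begin

lemma bilip_props:
  assumes "bilip_homeo X f"
  obtains L where "L \<ge> 1" "\<And>x. x\<in>X \<Longrightarrow> f x \<in> X" "\<And>x. x\<in>X \<Longrightarrow> inv_into X f x \<in> X"
    "\<And>x. x\<in>X \<Longrightarrow> f (inv_into X f x) = x" "\<And>x. x\<in>X \<Longrightarrow> inv_into X f (f x) = x"
    "\<And>x y. x\<in>X \<Longrightarrow> y\<in>X \<Longrightarrow> dist (f x) (f y) \<le> L * dist x y"
    "\<And>x y. x\<in>X \<Longrightarrow> y\<in>X \<Longrightarrow> dist x y \<le> L * dist (f x) (f y)"
    "\<And>x y. x\<in>X \<Longrightarrow> y\<in>X \<Longrightarrow> dist (inv_into X f x) (inv_into X f y) \<le> L * dist x y"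
    "\<And>x y. x\<in>X \<Longrightarrow> y\<in>X \<Longrightarrow> dist x y \<le> L * dist (inv_into X f x) (inv_into X f y)"
proof -
  from assms obtain L where b: "bij_betw f X X" and l1: "lipschitz_on L X f"
    and l2: "lipschitz_on L X (inv_into X f)" unfolding bilip_homeo_def by blast
  define M where "M = max L 1"
  have M: "M \<ge> 1" "L \<le> M" unfolding M_def by auto
  have m1: "\<And>x. x\<in>X \<Longrightarrow> f x \<in> X" using b by (meson bij_betwE)
  have m2: "\<And>x. x\<in>X \<Longrightarrow> inv_into X f x \<in> X" using b
    by (metis bij_betw_def inv_into_into)
  have m3: "\<And>x. x\<in>X \<Longrightarrow> f (inv_into X f x) = x" using b
    by (metis bij_betw_def f_inv_into_f)
  have m4: "\<And>x. x\<in>X \<Longrightarrow> inv_into X f (f x) = x" using b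
    by (metis bij_betw_def inv_into_f_f)
  have L1: "dist (f x) (f y) \<le> M * dist x y" if "x\<in>X" "y\<in>X" for x y
  proof -
    have "dist (f x) (f y) \<le> L * dist x y" using l1 that by (rule lipschitz_onD)
    also have "\<dots> \<le> M * dist x y" using M by (simp add: mult_right_mono)
    finally show ?thesis .
  qed
  have L2: "dist (inv_into X f x) (inv_into X f y) \<le> M * dist x y" if "x\<in>X" "y\<in>X" for x y
  proof -
    have "dist (inv_into X f x) (inv_into X f y) \<le> L * dist x y" using l2 that by (rule lipschitz_onD)
    also have "\<dots> \<le> M * dist x y" using M by (simp add: mult_right_mono)
    finally show ?thesis .
  qed
  show ?thesis
  proof (rule that[of M])
    show "dist x y \<le> M * dist (f x) (f y)" if "x\<in>X" "y\<in>X" for x y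
      using L2[of "f x" "f y"] m1 m4 that by simp
    show "dist x y \<le> M * dist (inv_into X f x) (inv_into X f y)" if "x\<in>X" "y\<in>X" for x y
      using L1[of "inv_into X f x" "inv_into X f y"] m2 m3 that by simp
  qed (use M m1 m2 m3 m4 L1 L2 in auto)
qed

lemma ratio_bdd:
  fixes \<phi> \<psi> :: "'a::metric_space \<Rightarrow> 'a"
  assumes a1: "\<And>x y. x\<in>X \<Longrightarrow> y\<in>X \<Longrightarrow> dist (\<phi> x) (\<phi> y) \<le> A * dist x y"
    and a2: "\<And>x y. x\<in>X \<Longrightarrow> y\<in>X \<Longrightarrow> dist x y \<le> A * dist (\<psi> x) (\<psi> y)"
    and a3: "\<And>x y. x\<in>X \<Longrightarrow> y\<in>X \<Longrightarrow> dist (\<psi> x) (\<psi> y) \<le> B * dist x y"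
    and a4: "\<And>x y. x\<in>X \<Longrightarrow> y\<in>X \<Longrightarrow> dist x y \<le> B * dist (\<phi> x) (\<phi> y)"
    and A: "A > 0" and B: "B > 0"
  shows "bdd_above (insert 0 {\<bar>ln (dist (\<phi> x) (\<phi> y) / dist (\<psi> x) (\<psi> y))\<bar> | x y. x \<in> X \<and> y \<in> X \<and> x \<noteq> y})"
proof -
  have "\<bar>ln (dist (\<phi> x) (\<phi> y) / dist (\<psi> x) (\<psi> y))\<bar> \<le> A*A + B*B"
    if "x\<in>X" "y\<in>X" "x\<noteq>y" for x y
  proof -
    let ?d = "dist x y" and ?p = "dist (\<phi> x) (\<phi> y)" and ?q = "dist (\<psi> x) (\<psi> y)"
    have d: "?d > 0" using that by simp
    have p: "?p > 0" using a4[OF that(1,2)] d B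
      by (metis dist_eq_0_iff mult_zero_right not_less zero_le_dist order.antisym)
    have q: "?q > 0" using a2[OF that(1,2)] d A
      by (metis dist_eq_0_iff mult_zero_right not_less zero_le_dist order.antisym)
    have r1: "?p / ?q \<le> A*A"
    proof -
      have "?p \<le> A * (A * ?q)" using a1[OF that(1,2)] a2[OF that(1,2)] A
        by (meson mult_left_mono order.trans less_imp_le)
      thus ?thesis using q by (simp add: divide_le_eq mult.assoc)
    qed
    have r2: "?q / ?p \<le> B*B"
    proof -
      have "?q \<le> B * (B * ?p)" using a3[OF that(1,2)] a4[OF that(1,2)] B
        by (meson mult_left_mono order.trans less_imp_le)
      thus ?thesis using p by (simp add: divide_le_eq mult.assoc)
    qed
    have "ln (?p / ?q) \<le> ?p / ?q - 1" using p q by (intro ln_le_minus_one) simp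
    moreover have "- ln (?p / ?q) \<le> ?q / ?p - 1"
    proof -
      have "- ln (?p / ?q) = ln (?q / ?p)" using p q by (simp add: ln_div)
      also have "\<dots> \<le> ?q / ?p - 1" using p q by (intro ln_le_minus_one) simp
      finally show ?thesis .
    qed
    moreover have "?p/?q \<ge> 0" "?q/?p \<ge> 0" using p q by auto
    ultimately show ?thesis using r1 r2 by linarith
  qed
  moreover have "0 \<le> A*A + B*B" by simp
  ultimately show ?thesis unfolding bdd_above_def by blast
qed

lemma iter_props:
  assumes "bilip_homeo X g"
  shows "x \<in> X \<Longrightarrow> iter_int X g n x \<in> X"
    and "x \<in> X \<Longrightarrow> iter_int X g (n+1) x = g (iter_int X g n x)"
    and "x \<in> X \<Longrightarrow> iter_int X g (n-1) x = inv_into X g (iter_int X g n x)"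
proof -
  obtain L where m1: "\<And>x. x\<in>X \<Longrightarrow> g x \<in> X" and m2: "\<And>x. x\<in>X \<Longrightarrow> inv_into X g x \<in> X"
    and m3: "\<And>x. x\<in>X \<Longrightarrow> g (inv_into X g x) = x" and m4: "\<And>x. x\<in>X \<Longrightarrow> inv_into X g (g x) = x"
    using bilip_props[OF assms] by metis
  have P1: "(g ^^ k) x \<in> X" if "x\<in>X" for k x by (induction k) (use that m1 in auto)
  have P2: "(inv_into X g ^^ k) x \<in> X" if "x\<in>X" for k x by (induction k) (use that m2 in auto)
  have mem: "iter_int X g n x \<in> X" if "x\<in>X" for n x
    unfolding iter_int_def using P1 P2 that by auto
  have suc: "iter_int X g (n+1) x = g (iter_int X g n x)" if "x\<in>X" for n x
  proof (cases "n \<ge> 0")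
    case True
    then have "nat (n+1) = Suc (nat n)" by simp
    then show ?thesis using True unfolding iter_int_def by simp
  next
    case False
    define k where "k = nat (- n) - 1"
    have nk: "nat (-n) = Suc k" using False k_def by simp
    have "iter_int X g (n+1) x = (inv_into X g ^^ k) x"
      using False k_def unfolding iter_int_def
      by (cases "n + 1 \<ge> 0") (auto simp: nat_diff_distrib)
    moreover have "iter_int X g n x = inv_into X g ((inv_into X g ^^ k) x)"
      using False nk unfolding iter_int_def by simp
    ultimately show ?thesis using m3 P2 that by simp
  qed
  show "x \<in> X \<Longrightarrow> iter_int X g n x \<in> X" by (rule mem)
  show "x \<in> X \<Longrightarrow> iter_int X g (n+1) x = g (iter_int X g n x)" by (rule suc)
  show "iter_int X g (n-1) x = inv_into X g (iter_int X g n x)" if "x \<in> X"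
    using suc[OF that, of "n-1"] m4 mem[OF that, of "n-1"] by simp
qed

lemma scale1: fixes u v L L' :: real
  assumes "u \<le> L * v" "1 \<le> L'" "0 \<le> v" "0 \<le> L" shows "u \<le> (L*L') * v" "u \<le> (L'*L) * v"
proof -
  have "v \<le> L' * v" using mult_right_mono[of 1 L' v] assms by simp
  hence "L * v \<le> L * (L' * v)" using assms by (simp add: mult_left_mono)
  hence "L * v \<le> (L*L') * v" by (simp add: mult.assoc)
  thus "u \<le> (L*L') * v" "u \<le> (L'*L) * v" using assms(1) by (simp_all add: mult.commute)
qed

lemma sup_nonneg:
  assumes "bdd_above (insert (0::real) S)" shows "0 \<le> Sup (insert 0 S)"
  using assms by (rule cSup_upper[rotated]) simp

theorem mainTheorem6:
  fixes X :: "'a::metric_space set" and f :: "'a \<Rightarrow> 'a"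
  assumes "compact X"
    and "bilip_homeo X f"
    and "hyperbolic_metric X f"
  shows "\<exists>\<epsilon>>0. \<exists>\<delta>>0. \<forall>g. bilip_homeo X g \<and> d_L X f g < \<epsilon> \<longrightarrow> expansive_const X g \<delta>"
proof -
  obtain \<delta>0 c where d0: "\<delta>0 > 0" and c: "c > 1" and hyp:
    "\<And>x y. x\<in>X \<Longrightarrow> y\<in>X \<Longrightarrow> dist x y < \<delta>0 \<Longrightarrow>
       max (dist (f x) (f y)) (dist (inv_into X f x) (inv_into X f y)) \<ge> c * dist x y"
    using assms(3) unfolding hyperbolic_metric_def by blast
  obtain Lf where Lf: "Lf \<ge> 1" "\<And>x. x\<in>X \<Longrightarrow> f x \<in> X" "\<And>x. x\<in>X \<Longrightarrow> inv_into X f x \<in> X"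
      "\<And>x. x\<in>X \<Longrightarrow> f (inv_into X f x) = x" "\<And>x. x\<in>X \<Longrightarrow> inv_into X f (f x) = x"
    "\<And>x y. x\<in>X \<Longrightarrow> y\<in>X \<Longrightarrow> dist (f x) (f y) \<le> Lf * dist x y"
    "\<And>x y. x\<in>X \<Longrightarrow> y\<in>X \<Longrightarrow> dist x y \<le> Lf * dist (f x) (f y)"
    "\<And>x y. x\<in>X \<Longrightarrow> y\<in>X \<Longrightarrow> dist (inv_into X f x) (inv_into X f y) \<le> Lf * dist x y"
    "\<And>x y. x\<in>X \<Longrightarrow> y\<in>X \<Longrightarrow> dist x y \<le> Lf * dist (inv_into X f x) (inv_into X f y)"
    by (rule bilip_props[OF assms(2)]) (rule that, assumption+)
  define s where "s = sqrt c"
  have s1: "s > 1" using c unfolding s_def by simp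
  have ss: "s * s = c" using c unfolding s_def by simp
  define \<epsilon> where "\<epsilon> = ln s"
  have e: "\<epsilon> > 0" "exp \<epsilon> = s" using s1 unfolding \<epsilon>_def by auto
  have bX: "bounded X" using assms(1) by (rule compact_imp_bounded)
  have "\<forall>g. bilip_homeo X g \<and> d_L X f g < \<epsilon> \<longrightarrow> expansive_const X g (\<delta>0/2)"
  proof (intro allI impI)
    fix g assume "bilip_homeo X g \<and> d_L X f g < \<epsilon>"
    hence gb: "bilip_homeo X g" and dL: "d_L X f g < \<epsilon>" by auto
    obtain Lg where Lg: "Lg \<ge> 1" "\<And>x. x\<in>X \<Longrightarrow> g x \<in> X" "\<And>x. x\<in>X \<Longrightarrow> inv_into X g x \<in> X"
      "\<And>x. x\<in>X \<Longrightarrow> g (inv_into X g x) = x" "\<And>x. x\<in>X \<Longrightarrow> inv_into X g (g x) = x"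
      "\<And>x y. x\<in>X \<Longrightarrow> y\<in>X \<Longrightarrow> dist (g x) (g y) \<le> Lg * dist x y"
      "\<And>x y. x\<in>X \<Longrightarrow> y\<in>X \<Longrightarrow> dist x y \<le> Lg * dist (g x) (g y)"
      "\<And>x y. x\<in>X \<Longrightarrow> y\<in>X \<Longrightarrow> dist (inv_into X g x) (inv_into X g y) \<le> Lg * dist x y"
      "\<And>x y. x\<in>X \<Longrightarrow> y\<in>X \<Longrightarrow> dist x y \<le> Lg * dist (inv_into X g x) (inv_into X g y)"
      by (rule bilip_props[OF gb]) (rule that, assumption+)
    let ?S1 = "{\<bar>ln (dist (f x) (f y) / dist (g x) (g y))\<bar> | x y. x \<in> X \<and> y \<in> X \<and> x \<noteq> y}"
    let ?S2 = "{\<bar>ln (dist (inv_into X f x) (inv_into X f y) / dist (inv_into X g x) (inv_into X g y))\<bar> | x y. x \<in> X \<and> y \<in> X \<and> x \<noteq> y}"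
    have b1: "bdd_above (insert 0 ?S1)"
      by (rule ratio_bdd[where A="Lf * Lg" and B = "Lg * Lf"])
        
        (use scale1(1)[OF Lf(6) Lg(1) zero_le_dist] scale1(2)[OF Lg(7) Lf(1) zero_le_dist]
           scale1(1)[OF Lg(6) Lf(1) zero_le_dist] scale1(2)[OF Lf(7) Lg(1) zero_le_dist] Lf(1) Lg(1)
         in \<open>simp_all add: mult_pos_pos\<close>)
    have b2: "bdd_above (insert 0 ?S2)"
      by (rule ratio_bdd[where A="Lf * Lg" and B = "Lg * Lf"])
        
        (use scale1(1)[OF Lf(8) Lg(1) zero_le_dist] scale1(2)[OF Lg(9) Lf(1) zero_le_dist]
           scale1(1)[OF Lg(8) Lf(1) zero_le_dist] scale1(2)[OF Lf(9) Lg(1) zero_le_dist] Lf(1) Lg(1)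
         in \<open>simp_all add: mult_pos_pos\<close>)
    have bc1: "bdd_above (insert 0 ((\<lambda>x. dist (f x) (g x)) ` X))"
      unfolding bdd_above_def
    proof (intro exI[of _ "diameter X"] ballI)
      fix z assume "z \<in> insert 0 ((\<lambda>x. dist (f x) (g x)) ` X)"
      then consider "z = 0" | x where "x \<in> X" "z = dist (f x) (g x)" by blast
      thus "z \<le> diameter X"
      proof cases
        case 1 thus ?thesis using diameter_ge_0[OF bX] by simp
      next
        case 2 thus ?thesis using diameter_bounded_bound[OF bX Lf(2)[OF 2(1)] Lg(2)[OF 2(1)]] by simp
      qed
    qed
    have bc2: "bdd_above (insert 0 ((\<lambda>x. dist (inv_into X f x) (inv_into X g x)) ` X))"
      unfolding bdd_above_def
    proof (intro exI[of _ "diameter X"] ballI)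
      fix z assume "z \<in> insert 0 ((\<lambda>x. dist (inv_into X f x) (inv_into X g x)) ` X)"
      then consider "z = 0" | x where "x \<in> X" "z = dist (inv_into X f x) (inv_into X g x)" by blast
      thus "z \<le> diameter X"
      proof cases
        case 1 thus ?thesis using diameter_ge_0[OF bX] by simp
      next
        case 2 thus ?thesis using diameter_bounded_bound[OF bX Lf(3)[OF 2(1)] Lg(3)[OF 2(1)]] by simp
      qed
    qed
    have "d_C0 X f g \<ge> 0" unfolding d_C0_def using sup_nonneg[OF bc1] sup_nonneg[OF bc2] by linarith
    moreover have n1: "d_L' X f g \<ge> 0" unfolding d_L'_def by (rule sup_nonneg[OF b1])
    moreover have n2: "d_L' X (inv_into X f) (inv_into X g) \<ge> 0" unfolding d_L'_def by (rule sup_nonneg[OF b2])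
    ultimately have l1: "d_L' X f g < \<epsilon>" and l2: "d_L' X (inv_into X f) (inv_into X g) < \<epsilon>"
      using dL unfolding d_L_def by linarith+
    have key: "p < s * q" if "p > 0" "q > 0" "\<bar>ln (p / q)\<bar> < \<epsilon>" for p q :: real
    proof -
      have "ln (p/q) < \<epsilon>" using that by linarith
      hence "exp (ln (p / q)) < exp \<epsilon>" by simp
      hence "p / q < exp \<epsilon>" using that by simp
      thus ?thesis using that e by (simp add: divide_less_eq mult.commute)
    qed
    have pos: "dist (h x) (h y) > 0" if "x\<in>X" "y\<in>X" "x\<noteq>y"
      "\<And>x y. x\<in>X \<Longrightarrow> y\<in>X \<Longrightarrow> dist x y \<le> L * dist (h x) (h y)" for h :: "'a \<Rightarrow> 'a" and L x y
    proof (rule ccontr)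
      assume "\<not> ?thesis"
      hence "dist (h x) (h y) = 0" by simp
      thus False using that(4)[OF that(1,2)] that(3) by simp
    qed
    have F1: "dist (f x) (f y) < s * dist (g x) (g y)" if "x\<in>X" "y\<in>X" "x\<noteq>y" for x y
    proof (rule key)
      show "dist (f x) (f y) > 0" by (rule pos[OF that Lf(7)])
      show "dist (g x) (g y) > 0" by (rule pos[OF that Lg(7)])
      have "\<bar>ln (dist (f x) (f y) / dist (g x) (g y))\<bar> \<le> d_L' X f g" unfolding d_L'_def
        by (rule cSup_upper[OF _ b1]) (use that in blast)
      thus "\<bar>ln (dist (f x) (f y) / dist (g x) (g y))\<bar> < \<epsilon>" using l1 by linarith
    qed
    have F2: "dist (inv_into X f x) (inv_into X f y) < s * dist (inv_into X g x) (inv_into X g y)"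
      if "x\<in>X" "y\<in>X" "x\<noteq>y" for x y
    proof (rule key)
      show "dist (inv_into X f x) (inv_into X f y) > 0" by (rule pos[OF that Lf(9)])
      show "dist (inv_into X g x) (inv_into X g y) > 0" by (rule pos[OF that Lg(9)])
      have "\<bar>ln (dist (inv_into X f x) (inv_into X f y) / dist (inv_into X g x) (inv_into X g y))\<bar>
          \<le> d_L' X (inv_into X f) (inv_into X g)" unfolding d_L'_def
        by (rule cSup_upper[OF _ b2]) (use that in blast)
      thus "\<bar>ln (dist (inv_into X f x) (inv_into X f y) / dist (inv_into X g x) (inv_into X g y))\<bar> < \<epsilon>"
        using l2 by linarith
    qed
    have ghyp: "s * dist x y \<le> max (dist (g x) (g y)) (dist (inv_into X g x) (inv_into X g y))"
      if "x\<in>X" "y\<in>X" "dist x y < \<delta>0" for x y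
    proof (cases "x = y")
      case True thus ?thesis by simp
    next
      case False
      let ?M = "max (dist (g x) (g y)) (dist (inv_into X g x) (inv_into X g y))"
      have "s * (s * dist x y) \<le> max (dist (f x) (f y)) (dist (inv_into X f x) (inv_into X f y))"
        using hyp[OF that] ss by (simp add: mult.assoc[symmetric])
      also have "\<dots> < s * ?M"
      proof -
        have "s * dist (g x) (g y) \<le> s * ?M" "s * dist (inv_into X g x) (inv_into X g y) \<le> s * ?M"
          using s1 by (intro mult_left_mono; simp)+
        thus ?thesis using F1[OF that(1,2) False] F2[OF that(1,2) False] by simp
      qed
      finally show ?thesis using s1 by simp
    qed
    show "expansive_const X g (\<delta>0/2)" unfolding expansive_const_def
    proof (intro conjI ballI impI)
      show "\<delta>0/2 > 0" using d0 by simp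
      fix x y assume x: "x\<in>X" and y: "y\<in>X"
        and bd: "\<forall>n::int. dist (iter_int X g n x) (iter_int X g n y) \<le> \<delta>0/2"
      define a where "a n = dist (iter_int X g n x) (iter_int X g n y)" for n
      show "x = y"
      proof (rule ccontr)
        assume "x \<noteq> y"
        have a0: "a 0 > 0" using \<open>x\<noteq>y\<close> unfolding a_def iter_int_def by simp
        have ba: "bdd_above (range a)" using bd unfolding a_def bdd_above_def by blast
        define S where "S = Sup (range a)"
        have aS: "a n \<le> S" for n unfolding S_def using ba by (rule cSup_upper[rotated]) simp
        have Sp: "S > 0" using aS[of 0] a0 by simp
        obtain n where n: "a n > S / s"
        proof (rule ccontr)
          assume "\<not> thesis"
          hence "\<forall>n. a n \<le> S / s" using that by (meson not_le)
          hence "S \<le> S / s" unfolding S_def by (intro cSup_least) auto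
          thus False using Sp s1 by (simp add: le_divide_eq)
        qed
        have "s * a n \<le> max (a (n+1)) (a (n-1))"
        proof -
          have lt: "dist (iter_int X g n x) (iter_int X g n y) < \<delta>0" using bd[rule_format, of n] d0 by linarith
          have "a (n+1) = dist (g (iter_int X g n x)) (g (iter_int X g n y))"
            unfolding a_def using iter_props(2)[OF gb x, of n] iter_props(2)[OF gb y, of n] by simp
          moreover have "a (n-1) = dist (inv_into X g (iter_int X g n x)) (inv_into X g (iter_int X g n y))"
            unfolding a_def using iter_props(3)[OF gb x, of n] iter_props(3)[OF gb y, of n] by simp
          ultimately show ?thesis
            using ghyp[OF iter_props(1)[OF gb x] iter_props(1)[OF gb y] lt] unfolding a_def by simp
        qed
        moreover have "s * a n > S" using n s1 by (simp add: divide_less_eq mult.commute)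
        ultimately show False using aS[of "n+1"] aS[of "n-1"] by linarith
      qed
    qed
  qed
  moreover have "\<delta>0/2 > 0" using d0 by simp
  ultimately show ?thesis using e(1) by blast
qed

end
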